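(* Let $\Phi = \{\xi = (\tau_L,\delta_L,\tau_R,\delta_R) \in \mathbb{R}^4 : \tau_L > |\delta_L + 1|,\ \tau_R < -|\delta_R+1|\}$, $\alpha(\xi) = \tau_L\tau_R + (\delta_L - 1)(\delta_R - 1)$, and $$g(\xi) = \left(\tau_R^2 - 2\delta_R,\ \delta_R^2,\ \tau_L\tau_R - \delta_L - \delta_R,\ \delta_L\delta_R\right).$$ If $\xi \in \Phi$ and $\alpha(\xi) < 0$, then $g(\xi) \in \Phi$. *)

theory Defs
  imports Complex_Main
begin

definition Phi :: "(real \<times> real \<times> real \<times> real) set" where
  "Phi = {(tL, dL, tR, dR). tL > \<bar>dL + 1\<bar> \<and> tR < - \<bar>dR + 1\<bar>}"

fun alpha :: "real \<times> real \<times> real \<times> real \<Rightarrow> real" where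
  "alpha (tL, dL, tR, dR) = tL * tR + (dL - 1) * (dR - 1)"

fun g :: "real \<times> real \<times> real \<times> real \<Rightarrow> real \<times> real \<times> real \<times> real" where
  "g (tL, dL, tR, dR) = (tR^2 - 2 * dR, dR^2, tL * tR - dL - dR, dL * dR)"

end

theory Submission
  imports Defs
begin

theorem proposition4p3:
  fixes \<xi> :: "real \<times> real \<times> real \<times> real"
  assumes "\<xi> \<in> Phi" and "alpha \<xi> < 0"
  shows "g \<xi> \<in> Phi"
proof -
  obtain tL dL tR dR where xi: "\<xi> = (tL, dL, tR, dR)" by (cases \<xi>) auto
  have h1: "tL > \<bar>dL + 1\<bar>" and h2: "tR < - \<bar>dR + 1\<bar>" using assms(1) xi by (auto simp: Phi_def)
  have al: "tL * tR + (dL - 1) * (dR - 1) < 0" using assms(2) xi by simp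
  have sq: "tR^2 > (dR + 1)^2"
  proof -
    have "\<bar>dR + 1\<bar> < \<bar>tR\<bar>" using h2 by linarith
    hence "\<bar>dR + 1\<bar>^2 < \<bar>tR\<bar>^2" by (intro power_strict_mono) auto
    thus ?thesis by simp
  qed
  have A: "tR^2 - 2 * dR > \<bar>dR^2 + 1\<bar>"
    using sq by (simp add: power2_eq_square algebra_simps abs_if) (smt (verit) zero_le_square)
  have P: "tL * (- tR) > \<bar>dL + 1\<bar> * \<bar>dR + 1\<bar>"
  proof -
    have "tL * (- tR) > tL * \<bar>dR + 1\<bar>" using h1 h2
      by (intro mult_strict_left_mono) auto
    moreover have "tL * \<bar>dR + 1\<bar> \<ge> \<bar>dL + 1\<bar> * \<bar>dR + 1\<bar>" using h1
      by (intro mult_right_mono) auto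
    ultimately show ?thesis by linarith
  qed
  have "\<bar>dL + 1\<bar> * \<bar>dR + 1\<bar> \<ge> (dL + 1) * (dR + 1)"
    by (metis abs_ge_self abs_mult)
  hence B: "tL * tR - dL - dR < - \<bar>dL * dR + 1\<bar>"
  proof -
    have c2: "tL * tR < - ((dL + 1) * (dR + 1))" using P \<open>\<bar>dL + 1\<bar> * \<bar>dR + 1\<bar> \<ge> (dL + 1) * (dR + 1)\<close> by linarith
    show ?thesis
    proof (cases "dL * dR + 1 \<ge> 0")
      case True thus ?thesis using al by (simp add: algebra_simps)
    next
      case False
      have "- (\<bar>dL + 1\<bar> * \<bar>dR + 1\<bar>) \<le> (dL + 1) * (dR + 1)"
        by (metis abs_ge_minus_self abs_mult minus_le_iff)
      thus ?thesis using False P by (simp add: algebra_simps)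
    qed
  qed
  show ?thesis using A B xi by (simp add: Phi_def)
qed

end
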